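(* Let $f(X,I)=f_0(I)+f_1(I)X+f_2(I)X^2$ with $f_0,f_1,f_2$ smooth on $[0,\infty)$, and consider the planar system $\dot X=f(X,I)$, $\dot I=(X-1)I$. Let $\beta=(\beta_1,\beta_2)$ be $f$-compatible and let $\mathcal{T}(\beta)$ be the closed triangle in the $(X,I)$-plane with vertices $(\beta_2,0)$, $(\beta_1,0)$, $(0,1)$. Then there exist no periodic solutions, homoclinic loops or oriented phase polygons of this system contained in the interior $\mathcal{T}(\beta)\setminus\partial\mathcal{T}(\beta)$.
   Context: Put $\lambda:=f_0(1)$, $P_f(I):=(f_0(I)-\lambda I)/(1-I)$ (smoothly extended to $I=1$), $h_f(z,I):=P_f(I)+zf_1(I)+z^2(I+(1-I)f_2(I))$. A pair $\beta=(\beta_1,\beta_2)$ with $\beta_1>\beta_2$ is called $f$-compatible if $\beta_2\le\lambda\le\beta_1$ and $h_f(\beta_i,I)/(\beta_j-\beta_i)\ge0$ for all $I\in[0,1]$ and $\{i,j\}=\{1,2\}$. *)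

theory Defs
  imports "HOL-Analysis.Analysis"
begin

definition smooth_on_nonneg :: "(real \<Rightarrow> real) \<Rightarrow> bool" where
  "smooth_on_nonneg g \<longleftrightarrow> (\<exists>D :: nat \<Rightarrow> real \<Rightarrow> real.
      (\<forall>x\<ge>0. D 0 x = g x) \<and>
      (\<forall>n. \<forall>x\<ge>0. (D n has_real_derivative D (Suc n) x) (at x within {0..})))"

definition fpoly :: "(real \<Rightarrow> real) \<Rightarrow> (real \<Rightarrow> real) \<Rightarrow> (real \<Rightarrow> real) \<Rightarrow> real \<Rightarrow> real \<Rightarrow> real" where
  "fpoly f0 f1 f2 X I = f0 I + f1 I * X + f2 I * X^2"

definition vfield :: "(real \<Rightarrow> real) \<Rightarrow> (real \<Rightarrow> real) \<Rightarrow> (real \<Rightarrow> real) \<Rightarrow> real \<times> real \<Rightarrow> real \<times> real" where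
  "vfield f0 f1 f2 z = (fpoly f0 f1 f2 (fst z) (snd z), (fst z - 1) * snd z)"

definition lam :: "(real \<Rightarrow> real) \<Rightarrow> real" where
  "lam f0 = f0 1"

text \<open>P_f(I) = (f0 I - \<lambda> I)/(1 - I), extended smoothly (continuously) to I = 1,
  where its value is the limit \<lambda> - f0'(1).\<close>
definition Pf :: "(real \<Rightarrow> real) \<Rightarrow> real \<Rightarrow> real" where
  "Pf f0 I = (if I = 1 then lam f0 - deriv f0 1 else (f0 I - lam f0 * I) / (1 - I))"

definition hf :: "(real \<Rightarrow> real) \<Rightarrow> (real \<Rightarrow> real) \<Rightarrow> (real \<Rightarrow> real) \<Rightarrow> real \<Rightarrow> real \<Rightarrow> real" where
  "hf f0 f1 f2 z I = Pf f0 I + z * f1 I + z^2 * (I + (1 - I) * f2 I)"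

definition f_compatible :: "(real \<Rightarrow> real) \<Rightarrow> (real \<Rightarrow> real) \<Rightarrow> (real \<Rightarrow> real) \<Rightarrow> real \<times> real \<Rightarrow> bool" where
  "f_compatible f0 f1 f2 \<beta> \<longleftrightarrow>
     fst \<beta> > snd \<beta> \<and> snd \<beta> \<le> lam f0 \<and> lam f0 \<le> fst \<beta> \<and>
     (\<forall>I\<in>{0..1}. hf f0 f1 f2 (fst \<beta>) I / (snd \<beta> - fst \<beta>) \<ge> 0 \<and>
                  hf f0 f1 f2 (snd \<beta>) I / (fst \<beta> - snd \<beta>) \<ge> 0)"

definition triangle :: "real \<times> real \<Rightarrow> (real \<times> real) set" where
  "triangle \<beta> = convex hull {(snd \<beta>, 0), (fst \<beta>, 0), (0, 1)}"

definition is_solution :: "(real \<times> real \<Rightarrow> real \<times> real) \<Rightarrow> (real \<Rightarrow> real \<times> real) \<Rightarrow> bool" where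
  "is_solution F \<gamma> \<longleftrightarrow> (\<forall>t. (\<gamma> has_vector_derivative F (\<gamma> t)) (at t))"

definition equilibrium :: "(real \<times> real \<Rightarrow> real \<times> real) \<Rightarrow> real \<times> real \<Rightarrow> bool" where
  "equilibrium F p \<longleftrightarrow> F p = 0"

definition periodic_solution :: "(real \<times> real \<Rightarrow> real \<times> real) \<Rightarrow> (real \<Rightarrow> real \<times> real) \<Rightarrow> bool" where
  "periodic_solution F \<gamma> \<longleftrightarrow> is_solution F \<gamma> \<and> (\<exists>T>0. \<forall>t. \<gamma> (t + T) = \<gamma> t) \<and>
     (\<exists>s t. \<gamma> s \<noteq> \<gamma> t)"

definition connecting_orbit :: "(real \<times> real \<Rightarrow> real \<times> real) \<Rightarrow> (real \<Rightarrow> real \<times> real) \<Rightarrow> real \<times> real \<Rightarrow> real \<times> real \<Rightarrow> bool" where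
  "connecting_orbit F \<gamma> p q \<longleftrightarrow> is_solution F \<gamma> \<and> equilibrium F p \<and> equilibrium F q \<and>
     (\<exists>s t. \<gamma> s \<noteq> \<gamma> t) \<and> (\<gamma> \<longlongrightarrow> p) at_bot \<and> (\<gamma> \<longlongrightarrow> q) at_top"

definition homoclinic_loop :: "(real \<times> real \<Rightarrow> real \<times> real) \<Rightarrow> (real \<times> real) set \<Rightarrow> bool" where
  "homoclinic_loop F S \<longleftrightarrow> (\<exists>\<gamma> p. connecting_orbit F \<gamma> p p \<and> S = insert p (range \<gamma>))"

definition oriented_phase_polygon :: "(real \<times> real \<Rightarrow> real \<times> real) \<Rightarrow> (real \<times> real) set \<Rightarrow> bool" where
  "oriented_phase_polygon F S \<longleftrightarrow> (\<exists>n::nat. \<exists>p :: nat \<Rightarrow> real \<times> real. \<exists>\<gamma> :: nat \<Rightarrow> real \<Rightarrow> real \<times> real.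
      n \<ge> 2 \<and> inj_on p {..<n} \<and>
      (\<forall>i<n. connecting_orbit F (\<gamma> i) (p i) (p (Suc i mod n))) \<and>
      S = p ` {..<n} \<union> (\<Union>i<n. range (\<gamma> i)))"

end

theory Submission
  imports Defs
begin


lemma antideriv_open:
  fixes r :: "real \<Rightarrow> real"
  assumes cont: "continuous_on {lo<..<hi} r" and lh: "lo < hi"
  obtains G where "\<And>x. x \<in> {lo<..<hi} \<Longrightarrow> (G has_real_derivative r x) (at x)"
proof -
  define c0 where "c0 = (lo + hi) / 2"
  have c0: "lo < c0" "c0 < hi" using lh by (simp_all add: c0_def)
  define G where "G x = integral {c0..x} r - integral {x..c0} r" for x
  have "(G has_real_derivative r x) (at x)" if x: "x \<in> {lo<..<hi}" for x
  proof -
    define a where "a = (lo + min x c0) / 2"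
    define b where "b = (hi + max x c0) / 2"
    have ab: "lo < a" "a < min x c0" "max x c0 < b" "b < hi" using x c0 by (auto simp: a_def b_def)
    have sub: "{a..b} \<subseteq> {lo<..<hi}" using ab by auto
    have cab: "continuous_on {a..b} r" using continuous_on_subset[OF cont sub] .
    have intg: "r integrable_on {a..b}" using integrable_continuous_interval[OF cab] .
    define H where "H y = integral {a..y} r - integral {a..c0} r" for y
    have eq: "G y = H y" if y: "y \<in> {a<..<b}" for y
    proof (cases "c0 \<le> y")
      case True
      have i1: "r integrable_on {a..y}" using integrable_on_subinterval[OF intg] y by auto
      have "integral {a..c0} r + integral {c0..y} r = integral {a..y} r"
      proof -
        have "a \<le> c0" using ab by simp
        then show ?thesis by (rule Henstock_Kurzweil_Integration.integral_combine[OF _ True i1])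
      qed
      moreover have "integral {y..c0} r = 0"
      proof (cases "y = c0")
        case True then show ?thesis by simp
      next
        case False then have "{y..c0} = {}" using \<open>c0 \<le> y\<close> by auto
        then show ?thesis by simp
      qed
      ultimately show ?thesis unfolding G_def H_def by linarith
    next
      case False
      have i1: "r integrable_on {a..c0}" using integrable_on_subinterval[OF intg] ab by auto
      have "integral {a..y} r + integral {y..c0} r = integral {a..c0} r"
      proof -
        have "a \<le> y" "y \<le> c0" using y False by auto
        then show ?thesis by (rule Henstock_Kurzweil_Integration.integral_combine[OF _ _ i1])
      qed
      moreover have "{c0..y} = {}" using False by auto
      then have "integral {c0..y} r = 0" by simp
      ultimately show ?thesis unfolding G_def H_def by linarith
    qed
    have xin: "x \<in> {a..b}" using ab by auto
    have Hd: "(H has_real_derivative r x) (at x within {a..b})"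
      unfolding H_def
      using DERIV_diff[OF integral_has_real_derivative[OF cab xin] DERIV_const[of "integral {a..c0} r"]] by simp
    have xi: "x \<in> interior {a..b}" using ab by auto
    have "(H has_real_derivative r x) (at x)" using Hd unfolding at_within_interior[OF xi] .
    then show ?thesis
      by (rule has_field_derivative_transform_within_open[of _ _ _ "{a<..<b}"])
         (use ab eq in \<open>simp_all\<close>)
  qed
  then show ?thesis by (rule that)
qed



lemma sol_comp:
  assumes "is_solution (vfield f0 f1 f2) \<gamma>"
  shows "((\<lambda>t. fst (\<gamma> t)) has_real_derivative fpoly f0 f1 f2 (fst (\<gamma> t)) (snd (\<gamma> t))) (at t)"
    and "((\<lambda>t. snd (\<gamma> t)) has_real_derivative (fst (\<gamma> t) - 1) * snd (\<gamma> t)) (at t)"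
proof -
  define v where "v = vfield f0 f1 f2 (\<gamma> t)"
  have d: "(\<gamma> has_derivative (\<lambda>h. h *\<^sub>R v)) (at t)"
    using assms unfolding is_solution_def has_vector_derivative_def v_def by blast
  have e1: "(\<lambda>h. fst (h *\<^sub>R v)) = (*) (fst v)" by (auto simp: fun_eq_iff)
  have e2: "(\<lambda>h. snd (h *\<^sub>R v)) = (*) (snd v)" by (auto simp: fun_eq_iff)
  have "((\<lambda>t. fst (\<gamma> t)) has_derivative (\<lambda>h. fst (h *\<^sub>R v))) (at t)"
    using has_derivative_fst[OF d] .
  then have "((\<lambda>t. fst (\<gamma> t)) has_real_derivative fst v) (at t)"
    unfolding has_field_derivative_def e1 .
  then show "((\<lambda>t. fst (\<gamma> t)) has_real_derivative fpoly f0 f1 f2 (fst (\<gamma> t)) (snd (\<gamma> t))) (at t)"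
    by (simp add: v_def vfield_def)
  have "((\<lambda>t. snd (\<gamma> t)) has_derivative (\<lambda>h. snd (h *\<^sub>R v))) (at t)"
    using has_derivative_snd[OF d] .
  then have "((\<lambda>t. snd (\<gamma> t)) has_real_derivative snd v) (at t)"
    unfolding has_field_derivative_def e2 .
  then show "((\<lambda>t. snd (\<gamma> t)) has_real_derivative (fst (\<gamma> t) - 1) * snd (\<gamma> t)) (at t)"
    by (simp add: v_def vfield_def)
qed


lemma smooth_cont:
  assumes "smooth_on_nonneg g"
  shows "continuous_on {0<..} g"
proof -
  obtain D where D0: "\<forall>x\<ge>0. D 0 x = g x"
    and DD: "\<forall>n. \<forall>x\<ge>0. (D n has_real_derivative D (Suc n) x) (at x within {0..})"
    using assms unfolding smooth_on_nonneg_def by blast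
  have "isCont (D 0) x" if "x \<in> {0<..}" for x
  proof -
    have "x \<in> interior {0..}" using that by simp
    moreover have "(D 0 has_real_derivative D (Suc 0) x) (at x within {0..})"
      using DD that by simp
    ultimately have "(D 0 has_real_derivative D (Suc 0) x) (at x)"
      using at_within_interior by metis
    then show ?thesis by (rule DERIV_isCont)
  qed
  then have "continuous_on {0<..} (D 0)" by (simp add: continuous_at_imp_continuous_on)
  then show ?thesis
    by (rule continuous_on_eq) (use D0 in simp)
qed


lemma glob_min:
  fixes y :: "real \<Rightarrow> real"
  assumes cont: "continuous_on UNIV y" and la: "(y \<longlongrightarrow> a) at_bot" and lb: "(y \<longlongrightarrow> b) at_top"
    and ta: "y t < a" and tb: "y t < b"
  shows "\<exists>s. \<forall>r. y s \<le> y r"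
proof -
  have "eventually (\<lambda>r. y t < y r) at_bot" using order_tendstoD(1)[OF la ta] .
  then obtain N1 where N1: "\<And>r. r \<le> N1 \<Longrightarrow> y t < y r" by (auto simp: eventually_at_bot_linorder)
  have "eventually (\<lambda>r. y t < y r) at_top" using order_tendstoD(1)[OF lb tb] .
  then obtain N2 where N2: "\<And>r. r \<ge> N2 \<Longrightarrow> y t < y r" by (auto simp: eventually_at_top_linorder)
  define S where "S = {min N1 t .. max N2 t}"
  have "t \<in> S" by (simp add: S_def)
  then have "S \<noteq> {}" by auto
  then obtain s where s: "s \<in> S" "\<And>r. r \<in> S \<Longrightarrow> y s \<le> y r"
    using continuous_attains_inf[of S y] continuous_on_subset[OF cont] by (auto simp: S_def)
  have "y s \<le> y r" for r
  proof (cases "r \<in> S")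
    case True then show ?thesis using s by auto
  next
    case False
    then have "r < min N1 t \<or> r > max N2 t" by (auto simp: S_def)
    then have "y t < y r" using N1 N2 by force
    moreover have "y s \<le> y t" using s \<open>t \<in> S\<close> by auto
    ultimately show ?thesis by linarith
  qed
  then show ?thesis by blast
qed

lemma glob_max:
  fixes y :: "real \<Rightarrow> real"
  assumes cont: "continuous_on UNIV y" and la: "(y \<longlongrightarrow> a) at_bot" and lb: "(y \<longlongrightarrow> b) at_top"
    and ta: "y t > a" and tb: "y t > b"
  shows "\<exists>s. \<forall>r. y r \<le> y s"
proof -
  have "\<exists>s. \<forall>r. (\<lambda>t. - y t) s \<le> (\<lambda>t. - y t) r"
  proof (rule glob_min[of _ "-a" "-b" t])
    show "continuous_on UNIV (\<lambda>t. - y t)" using cont by (rule continuous_on_minus)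
    show "((\<lambda>t. - y t) \<longlongrightarrow> - a) at_bot" using la by (rule tendsto_minus)
    show "((\<lambda>t. - y t) \<longlongrightarrow> - b) at_top" using lb by (rule tendsto_minus)
  qed (use ta tb in auto)
  then show ?thesis by auto
qed




lemma alg1:
  fixes w y A B D L :: real
  assumes "w \<noteq> 0" "y = 1 - w"
  shows "(A - L*y)/w + (1/w)*B + (1/w)^2*(y + w*D) + (L - 1/w)*(y/w) = (1/w)*(A+B+D)"
  using assms by (simp add: field_simps power2_eq_square)

lemma alg2:
  fixes p q z b1 b2 P B C :: real
  assumes "p \<noteq> 0" "q \<noteq> 0" "b2 = z - p" "b1 = z + q"
  shows "(1/p + 1/q) * (P + z*B + z^2*C) = (P + b2*B + b2^2*C)/p + (P + b1*B + b1^2*C)/q - C*(b1-b2)"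
  using assms(1,2) unfolding assms(3,4) by (simp add: field_simps power2_eq_square)

lemma alg3:
  fixes p q z b1 b2 L :: real
  assumes "p \<noteq> 0" "q \<noteq> 0" "b2 = z - p" "b1 = z + q"
  shows "(1/p + 1/q) * (L - z) = (L - b2)/p - (b1 - L)/q"
  using assms(1,2) unfolding assms(3,4) by (simp add: field_simps)

lemma alg_c:
  fixes X Y w :: real
  assumes "w \<noteq> 0" "Y = 1 - w"
  shows "(0 * w - 1 * (- ((X - 1) * Y))) / (w * w) = (Y/w) * (X/w - 1/w)"
  using assms(1) unfolding assms(2) by (simp add: field_simps)

lemma alg_Z:
  fixes X Y w A B Cc L :: real
  assumes "w \<noteq> 0" "Y = 1 - w"
  shows "((A + B*X + Cc*X^2)*w - X*(-((X-1)*Y)))/(w*w)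
     = ((A - L*Y)/w + (X/w)*B + (X/w)^2*(Y + w*Cc)) + (L - X/w)*(Y/w)"
  using assms(1) unfolding assms(2) by (simp add: field_simps power2_eq_square)

locale tri =
  fixes f0 f1 f2 :: "real \<Rightarrow> real" and b1 b2 :: real
  assumes cf0: "continuous_on {0<..} f0" and cf1: "continuous_on {0<..} f1"
    and cf2: "continuous_on {0<..} f2"
    and bb: "b2 < b1" and lb2: "b2 \<le> lam f0" and lb1: "lam f0 \<le> b1"
    and hb1: "\<And>I. 0 \<le> I \<Longrightarrow> I \<le> 1 \<Longrightarrow> hf f0 f1 f2 b1 I \<le> 0"
    and hb2: "\<And>I. 0 \<le> I \<Longrightarrow> I \<le> 1 \<Longrightarrow> 0 \<le> hf f0 f1 f2 b2 I"
begin

definition phi :: "real \<Rightarrow> real" where "phi z = 1/(z-b2) + 1/(b1-z)"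
definition Lam :: "real \<Rightarrow> real" where "Lam z = ln (z-b2) - ln (b1-z)"
definition Mm :: "real \<Rightarrow> real" where "Mm z = b2 * ln (z-b2) - b1 * ln (b1-z)"
definition rr :: "real \<Rightarrow> real" where
  "rr c = phi c * c * fpoly f0 f1 f2 1 ((c-1)/c) / (c-1) - Lam c"
definition RR :: "real \<Rightarrow> real \<Rightarrow> real" where
  "RR y z = phi z * (hf f0 f1 f2 z y + (lam f0 - z) * (y/(1-y))) / (y/(1-y)) - Lam z"

lemma dLam: "b2 < z \<Longrightarrow> z < b1 \<Longrightarrow> (Lam has_real_derivative phi z) (at z)"
  unfolding Lam_def phi_def by (auto intro!: derivative_eq_intros)

lemma dMm: "b2 < z \<Longrightarrow> z < b1 \<Longrightarrow> (Mm has_real_derivative z * phi z) (at z)"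
  unfolding Mm_def phi_def by (auto intro!: derivative_eq_intros simp: field_simps)

lemma RR_c:
  assumes "0 < y" "y < 1"
  shows "RR y (1/(1-y)) = rr (1/(1-y))"
proof -
  define c where "c = 1/(1-y)"
  have y1: "1 - y \<noteq> 0" using assms by simp
  have e1: "(c-1)/c = y" using y1 by (simp add: c_def field_simps)
  have e2: "y/(1-y) = c - 1" using y1 by (simp add: c_def field_simps)
  define w where "w = 1 - y"
  have w0: "w \<noteq> 0" and yw: "y = 1 - w" using y1 by (auto simp: w_def)
  have cw: "c = 1/w" by (simp add: c_def w_def)
  have c1: "c - 1 = y/w" using w0 yw cw by (simp add: field_simps)
  have key: "hf f0 f1 f2 c y + (lam f0 - c) * (c - 1) = c * fpoly f0 f1 f2 1 y"
  proof -
    have Pfe: "Pf f0 y = (f0 y - lam f0 * y)/w" using assms by (simp add: Pf_def w_def)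
    show ?thesis unfolding hf_def fpoly_def c1 cw Pfe
      using w0 by (simp add: yw field_simps power2_eq_square)
  qed
  show ?thesis unfolding c_def[symmetric] RR_def rr_def e1 e2 key by simp
qed

lemma RR_alt:
  assumes "0 < y" "y < 1" "b2 < z" "z < b1"
  shows "RR y z = (hf f0 f1 f2 b2 y / (z-b2) + hf f0 f1 f2 b1 y / (b1-z)
        - (y + (1-y) * f2 y) * (b1-b2)) / (y/(1-y))
        + (lam f0 - b2)/(z-b2) - (b1 - lam f0)/(b1-z) - ln (z-b2) + ln (b1-z)"
proof -
  have n1: "z - b2 \<noteq> 0" "b1 - z \<noteq> 0" using assms by auto
  have u: "y/(1-y) \<noteq> 0" using assms by auto
  have k1: "phi z * hf f0 f1 f2 z y = hf f0 f1 f2 b2 y / (z-b2) + hf f0 f1 f2 b1 y / (b1-z)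
        - (y + (1-y) * f2 y) * (b1-b2)"
    unfolding phi_def hf_def by (rule alg2) (use n1 in auto)
  have k2: "phi z * (lam f0 - z) = (lam f0 - b2)/(z-b2) - (b1 - lam f0)/(b1-z)"
    unfolding phi_def by (rule alg3) (use n1 in auto)
  have "RR y z = phi z * hf f0 f1 f2 z y / (y/(1-y)) + phi z * (lam f0 - z) - Lam z"
    using u unfolding RR_def by (simp add: field_simps)
  then show ?thesis unfolding k1 k2 Lam_def by simp
qed

lemma RR_mono:
  assumes y: "0 < y" "y < 1" and z: "b2 < z1" "z1 < z2" "z2 < b1"
  shows "RR y z2 < RR y z1"
proof -
  define g2 where "g2 = hf f0 f1 f2 b2 y"
  define g1 where "g1 = hf f0 f1 f2 b1 y"
  define u where "u = y/(1-y)"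
  define C where "C = (y + (1-y) * f2 y) * (b1-b2)"
  have g2: "0 \<le> g2" using hb2[of y] y by (simp add: g2_def)
  have g1: "g1 \<le> 0" using hb1[of y] y by (simp add: g1_def)
  have u: "0 < u" using y by (simp add: u_def)
  have l2: "0 \<le> lam f0 - b2" and l1: "0 \<le> b1 - lam f0" using lb1 lb2 by auto
  have p1: "0 < z1 - b2" "0 < z2 - b2" "0 < b1 - z1" "0 < b1 - z2" using z by auto
  have q1: "1/(z2-b2) \<le> 1/(z1-b2)" using p1 z by (simp add: frac_le)
  have q2: "1/(b1-z1) \<le> 1/(b1-z2)" using p1 z by (simp add: frac_le)
  have a1: "g2/(z2-b2) \<le> g2/(z1-b2)"
    using mult_left_mono[OF q1 g2] by simp
  have a2: "g1/(b1-z2) \<le> g1/(b1-z1)"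
    using mult_left_mono_neg[OF q2 g1] by simp
  have a3: "(lam f0 - b2)/(z2-b2) \<le> (lam f0 - b2)/(z1-b2)"
    using mult_left_mono[OF q1 l2] by simp
  have a4: "(b1 - lam f0)/(b1-z1) \<le> (b1 - lam f0)/(b1-z2)"
    using mult_left_mono[OF q2 l1] by simp
  have a5: "(g2/(z2-b2) + g1/(b1-z2) - C) / u \<le> (g2/(z1-b2) + g1/(b1-z1) - C) / u"
    using a1 a2 u by (intro divide_right_mono) auto
  have a6: "ln (z1 - b2) < ln (z2 - b2)" using p1 z by simp
  have a7: "ln (b1 - z2) < ln (b1 - z1)" using p1 z by simp
  have e1: "RR y z1 = (g2/(z1-b2) + g1/(b1-z1) - C) / u
        + (lam f0 - b2)/(z1-b2) - (b1 - lam f0)/(b1-z1) - ln (z1-b2) + ln (b1-z1)"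
    unfolding g1_def g2_def u_def C_def using RR_alt[of y z1] y z by simp
  have e2: "RR y z2 = (g2/(z2-b2) + g1/(b1-z2) - C) / u
        + (lam f0 - b2)/(z2-b2) - (b1 - lam f0)/(b1-z2) - ln (z2-b2) + ln (b1-z2)"
    unfolding g1_def g2_def u_def C_def using RR_alt[of y z2] y z by simp
  show ?thesis unfolding e1 e2 using a3 a4 a5 a6 a7 by linarith
qed

definition KK :: "real set" where "KK = {max 1 b2 <..< b1}"
definition inT :: "real \<times> real \<Rightarrow> bool" where
  "inT p \<longleftrightarrow> 0 < snd p \<and> b2 * (1 - snd p) < fst p \<and> fst p < b1 * (1 - snd p)"
definition goodH :: "real \<Rightarrow> bool" where "goodH y \<longleftrightarrow> b2 * (1 - y) < 1 \<and> 1 < b1 * (1 - y)"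
definition Om :: "(real \<times> real) set" where "Om = {p. inT p \<and> goodH (snd p)}"
definition GG :: "real \<Rightarrow> real" where
  "GG = (SOME G. \<forall>x\<in>KK. (G has_real_derivative rr x) (at x))"
definition V :: "real \<times> real \<Rightarrow> real" where
  "V p = GG (1/(1 - snd p)) - Mm (fst p/(1 - snd p)) + 1/(1 - snd p) * Lam (fst p/(1 - snd p))"

lemma rr_cont: "continuous_on KK rr"
proof -
  have img: "(\<lambda>c. (c-1)/c) ` KK \<subseteq> {0<..}" by (auto simp: KK_def)
  have cq: "continuous_on KK (\<lambda>c. (c-1)/c)" by (intro continuous_intros) (auto simp: KK_def)
  have h0: "continuous_on KK (\<lambda>c. f0 ((c-1)/c))" by (rule continuous_on_compose2[OF cf0 cq img])
  have h1: "continuous_on KK (\<lambda>c. f1 ((c-1)/c))" by (rule continuous_on_compose2[OF cf1 cq img])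
  have h2: "continuous_on KK (\<lambda>c. f2 ((c-1)/c))" by (rule continuous_on_compose2[OF cf2 cq img])
  have "continuous_on KK (\<lambda>c. (1/(c-b2) + 1/(b1-c)) * c * (f0 ((c-1)/c) + f1 ((c-1)/c) * 1 + f2 ((c-1)/c) * 1^2) / (c-1)
      - (ln (c-b2) - ln (b1-c)))"
    by (intro continuous_intros h0 h1 h2) (auto simp: KK_def)
  then show ?thesis unfolding rr_def phi_def Lam_def fpoly_def by simp
qed

lemma GG_deriv: "x \<in> KK \<Longrightarrow> (GG has_real_derivative rr x) (at x)"
proof -
  assume x: "x \<in> KK"
  then have lt: "max 1 b2 < b1" by (auto simp: KK_def)
  obtain G where "\<And>x. x \<in> {max 1 b2<..<b1} \<Longrightarrow> (G has_real_derivative rr x) (at x)"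
    using antideriv_open[OF rr_cont[unfolded KK_def] lt] by blast
  then have "\<exists>G. \<forall>x\<in>KK. (G has_real_derivative rr x) (at x)" unfolding KK_def by blast
  then have "\<forall>x\<in>KK. (GG has_real_derivative rr x) (at x)" unfolding GG_def by (rule someI_ex)
  then show ?thesis using x by blast
qed

lemma Om_facts:
  assumes "p \<in> Om"
  shows "0 < snd p" "snd p < 1" "b2 < fst p/(1 - snd p)" "fst p/(1 - snd p) < b1" "1/(1 - snd p) \<in> KK"
proof -
  obtain x y where p: "p = (x, y)" by (cases p)
  have h: "0 < y" "b2 * (1 - y) < x" "x < b1 * (1 - y)" "b2 * (1 - y) < 1" "1 < b1 * (1 - y)"
    using assms by (auto simp: Om_def inT_def goodH_def p)
  have "0 < (b1 - b2) * (1 - y)" using h by (simp add: algebra_simps)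
  then have w: "0 < 1 - y" using bb by (simp add: zero_less_mult_iff)
  show "0 < snd p" "snd p < 1" using h w by (auto simp: p)
  show "b2 < fst p/(1 - snd p)" "fst p/(1 - snd p) < b1" using h w
    by (auto simp: p pos_less_divide_eq pos_divide_less_eq)
  have "1 < 1/(1-y)" using w h by (simp add: pos_less_divide_eq)
  moreover have "b2 < 1/(1-y)" "1/(1-y) < b1" using h w
    by (auto simp: pos_less_divide_eq pos_divide_less_eq)
  ultimately show "1/(1 - snd p) \<in> KK" by (simp add: KK_def p)
qed

lemma V_deriv:
  assumes sol: "is_solution (vfield f0 f1 f2) \<gamma>" and om: "\<gamma> t \<in> Om"
  shows "\<exists>W. ((\<lambda>t. V (\<gamma> t)) has_real_derivative W) (at t) \<and> 0 \<le> W \<and> (W = 0 \<longrightarrow> fst (\<gamma> t) = 1)"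
proof -
  define x where "x = (\<lambda>t. fst (\<gamma> t))"
  define y where "y = (\<lambda>t. snd (\<gamma> t))"
  have dx: "(x has_real_derivative fpoly f0 f1 f2 (x t) (y t)) (at t)"
    using sol_comp(1)[OF sol] unfolding x_def y_def .
  have dy: "(y has_real_derivative (x t - 1) * y t) (at t)"
    using sol_comp(2)[OF sol] unfolding x_def y_def .
  have y0: "0 < y t" and y1: "y t < 1" and Zb: "b2 < x t/(1 - y t)" "x t/(1 - y t) < b1"
    and cK: "1/(1 - y t) \<in> KK"
    using Om_facts[OF om] unfolding x_def y_def by auto
  define w where "w = 1 - y t"
  have w0: "w \<noteq> 0" and yw: "y t = 1 - w" using y1 by (auto simp: w_def)
  define c where "c = 1/(1 - y t)"
  define Z where "Z = x t/(1 - y t)"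
  define u where "u = y t/(1 - y t)"
  define Zd where "Zd = hf f0 f1 f2 Z (y t) + (lam f0 - Z) * u"
  have u0: "0 < u" using y0 y1 by (simp add: u_def)
  have d1y: "((\<lambda>s. 1 - y s) has_real_derivative - ((x t - 1) * y t)) (at t)"
    using DERIV_diff[OF DERIV_const dy] by simp
  have dc: "((\<lambda>s. 1/(1 - y s)) has_real_derivative u * (Z - c)) (at t)"
  proof -
    have "((\<lambda>s. 1/(1 - y s)) has_real_derivative
        (0 * (1 - y t) - 1 * (- ((x t - 1) * y t))) / ((1 - y t) * (1 - y t))) (at t)"
      using DERIV_divide[OF DERIV_const[of 1] d1y] w0 by (simp add: w_def)
    moreover have "(0 * (1 - y t) - 1 * (- ((x t - 1) * y t))) / ((1 - y t) * (1 - y t)) = u * (Z - c)"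
      unfolding u_def Z_def c_def w_def[symmetric] using alg_c[OF w0 yw] by (simp add: diff_divide_distrib)
    ultimately show ?thesis by simp
  qed
  have dZ: "((\<lambda>s. x s/(1 - y s)) has_real_derivative Zd) (at t)"
  proof -
    have "((\<lambda>s. x s/(1 - y s)) has_real_derivative
        (fpoly f0 f1 f2 (x t) (y t) * (1 - y t) - x t * (- ((x t - 1) * y t))) / ((1 - y t) * (1 - y t))) (at t)"
      using DERIV_divide[OF dx d1y] w0 by (simp add: w_def)
    moreover have "(fpoly f0 f1 f2 (x t) (y t) * (1 - y t) - x t * (- ((x t - 1) * y t))) / ((1 - y t) * (1 - y t)) = Zd"
    proof -
      have Pfe: "Pf f0 (y t) = (f0 (y t) - lam f0 * y t)/w" using y1 by (simp add: Pf_def w_def)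
      show ?thesis unfolding Zd_def hf_def Pfe fpoly_def Z_def u_def w_def[symmetric]
        by (rule alg_Z[OF w0 yw])
    qed
    ultimately show ?thesis by simp
  qed
  have dG: "((\<lambda>s. GG (1/(1 - y s))) has_real_derivative rr c * (u * (Z - c))) (at t)"
    using DERIV_chain2[OF GG_deriv[OF cK] dc] unfolding c_def .
  have dM: "((\<lambda>s. Mm (x s/(1 - y s))) has_real_derivative Z * phi Z * Zd) (at t)"
    using DERIV_chain2[OF dMm[OF Zb] dZ] unfolding Z_def .
  have dL: "((\<lambda>s. Lam (x s/(1 - y s))) has_real_derivative phi Z * Zd) (at t)"
    using DERIV_chain2[OF dLam[OF Zb] dZ] unfolding Z_def .
  define W where "W = rr c * (u * (Z - c)) - Z * phi Z * Zd + (u * (Z - c) * Lam Z + phi Z * Zd * c)"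
  have Vfun: "(\<lambda>t. V (\<gamma> t)) = (\<lambda>s. GG (1/(1 - y s)) - Mm (x s/(1 - y s)) + 1/(1 - y s) * Lam (x s/(1 - y s)))"
    by (simp add: fun_eq_iff V_def x_def y_def)
  have dV: "((\<lambda>t. V (\<gamma> t)) has_real_derivative W) (at t)"
    unfolding Vfun W_def using DERIV_add[OF DERIV_diff[OF dG dM] DERIV_mult[OF dc dL]]
    unfolding c_def Z_def by simp
  have RRe: "RR (y t) Z = phi Z * Zd / u - Lam Z"
    by (simp add: RR_def Zd_def u_def)
  have Wf: "W = u * ((Z - c) * (rr c - RR (y t) Z))"
    unfolding RRe W_def using u0 by (simp add: field_simps)
  have rc: "rr c = RR (y t) c" unfolding c_def using RR_c[OF y0 y1] by simp
  have cb: "b2 < c" "c < b1" using cK by (auto simp: KK_def c_def)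
  have Zb': "b2 < Z" "Z < b1" using Zb by (auto simp: Z_def)
  have pos: "0 < (Z - c) * (rr c - RR (y t) Z)" if "Z \<noteq> c"
  proof (cases "Z < c")
    case True
    have "RR (y t) c < RR (y t) Z" using RR_mono[OF y0 y1 Zb'(1) True cb(2)] .
    then show ?thesis using True rc by (simp add: mult_neg_neg)
  next
    case False
    then have "c < Z" using that by auto
    then have "RR (y t) Z < RR (y t) c" using RR_mono[OF y0 y1 cb(1) _ Zb'(2)] by blast
    then show ?thesis using \<open>c < Z\<close> rc by simp
  qed
  have "0 \<le> W"
  proof (cases "Z = c")
    case True then show ?thesis by (simp add: Wf)
  next
    case False then show ?thesis using pos u0 by (simp add: Wf)
  qed
  moreover have "fst (\<gamma> t) = 1" if "W = 0"
  proof -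
    have "Z = c"
    proof (rule ccontr)
      assume "Z \<noteq> c"
      then have "0 < W" using pos u0 by (simp add: Wf)
      then show False using that by simp
    qed
    then have "x t = 1" using w0 by (simp add: Z_def c_def w_def[symmetric] field_simps)
    then show ?thesis by (simp add: x_def)
  qed
  ultimately show ?thesis using dV by blast
qed

end



context tri begin

abbreviation "F \<equiv> vfield f0 f1 f2"

lemma V_mono:
  assumes sol: "is_solution F \<gamma>" and om: "\<And>t. \<gamma> t \<in> Om" and st: "s \<le> t"
  shows "V (\<gamma> s) \<le> V (\<gamma> t)"
proof (rule DERIV_nonneg_imp_nondecreasing[OF st])
  fix r assume "s \<le> r" "r \<le> t"
  obtain W where "((\<lambda>t. V (\<gamma> t)) has_real_derivative W) (at r)" "0 \<le> W"
    using V_deriv[OF sol om[of r]] by blast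
  then show "\<exists>y. ((\<lambda>t. V (\<gamma> t)) has_real_derivative y) (at r) \<and> 0 \<le> y" by blast
qed

lemma V_const:
  assumes sol: "is_solution F \<gamma>" and om: "\<And>t. \<gamma> t \<in> Om" and c: "\<And>s. V (\<gamma> s) = V (\<gamma> 0)"
  shows "\<gamma> s = \<gamma> t"
proof -
  have x1: "fst (\<gamma> r) = 1" for r
  proof -
    obtain W where W: "((\<lambda>t. V (\<gamma> t)) has_real_derivative W) (at r)" "W = 0 \<longrightarrow> fst (\<gamma> r) = 1"
      using V_deriv[OF sol om[of r]] by blast
    have e: "(\<lambda>t. V (\<gamma> t)) = (\<lambda>_. V (\<gamma> 0))" using c by (rule ext)
    have "((\<lambda>t. V (\<gamma> t)) has_real_derivative 0) (at r)" unfolding e by (rule DERIV_const)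
    then have "W = 0" using DERIV_unique[OF W(1)] by simp
    then show ?thesis using W(2) by simp
  qed
  have "((\<lambda>t. snd (\<gamma> t)) has_real_derivative 0) (at r)" for r
    using sol_comp(2)[OF sol, of r] x1[of r] by simp
  then have "snd (\<gamma> s) = snd (\<gamma> t)" using DERIV_isconst_all[of "\<lambda>t. snd (\<gamma> t)"] by blast
  then show ?thesis using x1[of s] x1[of t] by (simp add: prod_eq_iff)
qed

lemma goodH_between:
  assumes "goodH a" "goodH b" "a \<le> y" "y \<le> b"
  shows "goodH y"
proof -
  have A: "b2 * (1 - a) < 1" "1 < b1 * (1 - a)" and B: "b2 * (1 - b) < 1" "1 < b1 * (1 - b)"
    using assms(1,2) by (auto simp: goodH_def)
  have ya: "1 - y \<le> 1 - a" and yb: "1 - b \<le> 1 - y" using assms(3,4) by auto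
  have "b2 * (1 - y) < 1"
  proof (cases "0 \<le> b2")
    case True then show ?thesis using mult_left_mono[OF ya True] A by linarith
  next
    case False then show ?thesis using mult_left_mono_neg[OF yb, of b2] B by linarith
  qed
  moreover have "1 < b1 * (1 - y)"
  proof (cases "0 \<le> b1")
    case True then show ?thesis using mult_left_mono[OF yb True] B by linarith
  next
    case False then show ?thesis using mult_left_mono_neg[OF ya, of b1] A by linarith
  qed
  ultimately show ?thesis by (simp add: goodH_def)
qed

lemma int_inT:
  assumes "p \<in> interior (convex hull {(b2, 0), (b1, 0), (0, 1)})"
  shows "inT p"
proof -
  define Cl where "Cl = {p. (0::real, -1::real) \<bullet> p \<le> 0} \<inter> {p. (-1, -b2) \<bullet> p \<le> -b2} \<inter> {p. (1, b1) \<bullet> p \<le> b1}"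
  have cv: "convex Cl" unfolding Cl_def by (intro convex_Int convex_halfspace_le)
  have pts: "{(b2, 0), (b1, 0), (0, 1)} \<subseteq> Cl" using bb by (auto simp: Cl_def inner_Pair)
  have "convex hull {(b2, 0), (b1, 0), (0, 1)} \<subseteq> Cl" using hull_minimal[of _ Cl convex, OF pts cv] .
  then have "p \<in> interior Cl" using assms interior_mono by blast
  moreover have "interior Cl = {p. (0::real, -1::real) \<bullet> p < 0} \<inter> {p. (-1, -b2) \<bullet> p < -b2} \<inter> {p. (1, b1) \<bullet> p < b1}"
  proof -
    have n1: "(0::real, -1::real) \<noteq> 0" and n2: "(-1::real, -b2) \<noteq> 0" and n3: "(1::real, b1) \<noteq> 0"
      by (simp_all add: zero_prod_def)
    show ?thesis unfolding Cl_def interior_Int interior_halfspace_le[OF n1]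
      interior_halfspace_le[OF n2] interior_halfspace_le[OF n3] ..
  qed
  ultimately show ?thesis
    by (cases p) (auto simp: inT_def inner_Pair algebra_simps)
qed

lemma equil_Om:
  assumes "equilibrium F p" "inT p"
  shows "fst p = 1" "p \<in> Om"
proof -
  have "(fst p - 1) * snd p = 0" using assms(1) unfolding equilibrium_def vfield_def
    by (simp add: zero_prod_def)
  moreover have "0 < snd p" using assms(2) by (simp add: inT_def)
  ultimately show x1: "fst p = 1" by simp
  show "p \<in> Om" using assms(2) x1 by (simp add: Om_def inT_def goodH_def)
qed

lemma turn_min:
  assumes sol: "is_solution F \<gamma>" and tT: "\<And>r. inT (\<gamma> r)" and m: "\<And>r. snd (\<gamma> s) \<le> snd (\<gamma> r)"
  shows "goodH (snd (\<gamma> s))"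
proof -
  have "(fst (\<gamma> s) - 1) * snd (\<gamma> s) = 0"
    by (rule DERIV_local_min[OF sol_comp(2)[OF sol], of 1]) (use m in auto)
  moreover have "0 < snd (\<gamma> s)" using tT[of s] by (simp add: inT_def)
  ultimately have "fst (\<gamma> s) = 1" by simp
  then show ?thesis using tT[of s] by (simp add: inT_def goodH_def)
qed

lemma turn_max:
  assumes sol: "is_solution F \<gamma>" and tT: "\<And>r. inT (\<gamma> r)" and m: "\<And>r. snd (\<gamma> r) \<le> snd (\<gamma> s)"
  shows "goodH (snd (\<gamma> s))"
proof -
  have "(fst (\<gamma> s) - 1) * snd (\<gamma> s) = 0"
    by (rule DERIV_local_max[OF sol_comp(2)[OF sol], of 1]) (use m in auto)
  moreover have "0 < snd (\<gamma> s)" using tT[of s] by (simp add: inT_def)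
  ultimately have "fst (\<gamma> s) = 1" by simp
  then show ?thesis using tT[of s] by (simp add: inT_def goodH_def)
qed

lemma sol_ycont:
  assumes sol: "is_solution F \<gamma>"
  shows "continuous_on UNIV (\<lambda>t. snd (\<gamma> t))"
  using sol_comp(2)[OF sol] DERIV_isCont by (blast intro: continuous_at_imp_continuous_on)

end



context tri begin

abbreviation "TT \<equiv> interior (convex hull {(b2, 0), (b1, 0), (0, 1)})"

lemma conn_Om:
  assumes co: "connecting_orbit F \<gamma> p q" and rg: "range \<gamma> \<subseteq> TT" and pT: "p \<in> TT" and qT: "q \<in> TT"
  shows "\<gamma> t \<in> Om"
proof -
  have sol: "is_solution F \<gamma>" and ep: "equilibrium F p" and eq: "equilibrium F q"
    and lp: "(\<gamma> \<longlongrightarrow> p) at_bot" and lq: "(\<gamma> \<longlongrightarrow> q) at_top"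
    using co unfolding connecting_orbit_def by auto
  have tT: "inT (\<gamma> r)" for r using rg int_inT by blast
  have gp: "goodH (snd p)" using equil_Om(2)[OF ep int_inT[OF pT]] by (simp add: Om_def)
  have gq: "goodH (snd q)" using equil_Om(2)[OF eq int_inT[OF qT]] by (simp add: Om_def)
  define y where "y = (\<lambda>t. snd (\<gamma> t))"
  have yc: "continuous_on UNIV y" unfolding y_def by (rule sol_ycont[OF sol])
  have ly1: "(y \<longlongrightarrow> snd p) at_bot" unfolding y_def by (rule tendsto_snd[OF lp])
  have ly2: "(y \<longlongrightarrow> snd q) at_top" unfolding y_def by (rule tendsto_snd[OF lq])
  obtain ya where ya: "goodH ya" "ya \<le> y t"
  proof (cases "min (snd p) (snd q) \<le> y t")
    case True
    have "goodH (min (snd p) (snd q))" using gp gq by (simp add: min_def)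
    then show ?thesis using that True by blast
  next
    case False
    have "y t < snd p" "y t < snd q" using False by auto
    then obtain s where s: "\<And>r. y s \<le> y r"
      using glob_min[OF yc ly1 ly2, of t] by blast
    have "goodH (y s)" unfolding y_def by (rule turn_min[OF sol tT]) (use s in \<open>simp add: y_def\<close>)
    then show ?thesis using that s by blast
  qed
  obtain yb where yb: "goodH yb" "y t \<le> yb"
  proof (cases "y t \<le> max (snd p) (snd q)")
    case True
    have "goodH (max (snd p) (snd q))" using gp gq by (simp add: max_def)
    then show ?thesis using that True by blast
  next
    case False
    have "y t > snd p" "y t > snd q" using False by auto
    then obtain s where s: "\<And>r. y r \<le> y s"
      using glob_max[OF yc ly1 ly2, of t] by blast
    have "goodH (y s)" unfolding y_def by (rule turn_max[OF sol tT]) (use s in \<open>simp add: y_def\<close>)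
    then show ?thesis using that s by blast
  qed
  have "goodH (y t)" by (rule goodH_between[OF ya(1) yb(1) ya(2) yb(2)])
  then show ?thesis using tT[of t] by (simp add: Om_def y_def)
qed

lemma V_lim:
  assumes l: "(\<gamma> \<longlongrightarrow> p) F'" and pO: "p \<in> Om"
  shows "((\<lambda>t. V (\<gamma> t)) \<longlongrightarrow> V p) F'"
proof -
  have f: "0 < snd p" "snd p < 1" "b2 < fst p/(1 - snd p)" "fst p/(1 - snd p) < b1" "1/(1 - snd p) \<in> KK"
    using Om_facts[OF pO] by auto
  have l1: "((\<lambda>t. fst (\<gamma> t)) \<longlongrightarrow> fst p) F'" using tendsto_fst[OF l] .
  have l2: "((\<lambda>t. snd (\<gamma> t)) \<longlongrightarrow> snd p) F'" using tendsto_snd[OF l] .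
  have lc: "((\<lambda>t. 1/(1 - snd (\<gamma> t))) \<longlongrightarrow> 1/(1 - snd p)) F'"
    using f by (intro tendsto_intros l2) auto
  have lz: "((\<lambda>t. fst (\<gamma> t)/(1 - snd (\<gamma> t))) \<longlongrightarrow> fst p/(1 - snd p)) F'"
    using f by (intro tendsto_intros l1 l2) auto
  have lG: "((\<lambda>t. GG (1/(1 - snd (\<gamma> t)))) \<longlongrightarrow> GG (1/(1 - snd p))) F'"
    by (rule isCont_tendsto_compose[OF DERIV_isCont[OF GG_deriv[OF f(5)]] lc])
  have lM: "((\<lambda>t. Mm (fst (\<gamma> t)/(1 - snd (\<gamma> t)))) \<longlongrightarrow> Mm (fst p/(1 - snd p))) F'"
    unfolding Mm_def using f by (intro tendsto_intros lz) auto
  have lL: "((\<lambda>t. Lam (fst (\<gamma> t)/(1 - snd (\<gamma> t)))) \<longlongrightarrow> Lam (fst p/(1 - snd p))) F'"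
    unfolding Lam_def using f by (intro tendsto_intros lz) auto
  show ?thesis unfolding V_def by (intro tendsto_intros lG lM lL lc)
qed

lemma V_conn:
  assumes co: "connecting_orbit F \<gamma> p q" and rg: "range \<gamma> \<subseteq> TT" and pT: "p \<in> TT" and qT: "q \<in> TT"
  shows "V p < V q"
proof -
  have sol: "is_solution F \<gamma>" and ep: "equilibrium F p" and eq: "equilibrium F q"
    and lp: "(\<gamma> \<longlongrightarrow> p) at_bot" and lq: "(\<gamma> \<longlongrightarrow> q) at_top"
    and nc: "\<exists>s t. \<gamma> s \<noteq> \<gamma> t"
    using co unfolding connecting_orbit_def by auto
  have om: "\<And>t. \<gamma> t \<in> Om" using conn_Om[OF co rg pT qT] .
  have pO: "p \<in> Om" using equil_Om(2)[OF ep int_inT[OF pT]] .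
  have qO: "q \<in> Om" using equil_Om(2)[OF eq int_inT[OF qT]] .
  have lo: "V p \<le> V (\<gamma> t)" for t
  proof (rule tendsto_upperbound[OF V_lim[OF lp pO]])
    show "\<forall>\<^sub>F s in at_bot. V (\<gamma> s) \<le> V (\<gamma> t)"
      unfolding eventually_at_bot_linorder using V_mono[OF sol om] by blast
  qed simp
  have hi: "V (\<gamma> t) \<le> V q" for t
  proof (rule tendsto_lowerbound[OF V_lim[OF lq qO]])
    show "\<forall>\<^sub>F s in at_top. V (\<gamma> t) \<le> V (\<gamma> s)"
      unfolding eventually_at_top_linorder using V_mono[OF sol om] by blast
  qed simp
  show ?thesis
  proof (rule ccontr)
    assume "\<not> V p < V q"
    then have "V p = V q" using lo[of 0] hi[of 0] by linarith
    then have "\<And>s. V (\<gamma> s) = V (\<gamma> 0)" using lo hi by (metis order_antisym)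
    then have "\<And>s t. \<gamma> s = \<gamma> t" using V_const[OF sol om] by blast
    then show False using nc by blast
  qed
qed

end



context tri begin

lemma no_periodic:
  assumes ps: "periodic_solution F \<gamma>" and rg: "range \<gamma> \<subseteq> TT"
  shows False
proof -
  obtain T where T: "T > 0" "\<And>t. \<gamma> (t + T) = \<gamma> t"
    using ps unfolding periodic_solution_def by auto
  have sol: "is_solution F \<gamma>" and nc: "\<exists>s t. \<gamma> s \<noteq> \<gamma> t"
    using ps unfolding periodic_solution_def by auto
  have tT: "inT (\<gamma> r)" for r using rg int_inT by blast
  have pn: "\<gamma> (t + real n * T) = \<gamma> t" for t n
  proof (induction n)
    case 0 then show ?case by simp
  next
    case (Suc n)
    have "\<gamma> (t + real (Suc n) * T) = \<gamma> ((t + real n * T) + T)" by (simp add: algebra_simps)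
    also have "\<dots> = \<gamma> t" using T(2) Suc by simp
    finally show ?case .
  qed
  have pi: "\<gamma> (t + of_int k * T) = \<gamma> t" for t k
  proof (cases "0 \<le> k")
    case True
    then obtain n where "k = int n" by (metis nonneg_eq_int)
    then show ?thesis using pn by simp
  next
    case False
    have "k = - int (nat (- k))" using False by simp
    then obtain n where n: "k = - int n" by blast
    have "\<gamma> ((t - real n * T) + real n * T) = \<gamma> (t - real n * T)" by (rule pn)
    then show ?thesis using n by simp
  qed
  define y where "y = (\<lambda>t. snd (\<gamma> t))"
  have yc: "continuous_on {0..T} y" unfolding y_def
    using sol_ycont[OF sol] by (rule continuous_on_subset) simp
  have red: "\<exists>r'\<in>{0..T}. y r = y r'" for r
  proof -
    define k where "k = floor (r / T)"
    have h1: "of_int k \<le> r / T" unfolding k_def by (rule of_int_floor_le)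
    have k1: "of_int k * T \<le> r" using pos_le_divide_eq[OF T(1)] h1 by blast
    have h2: "r / T < of_int k + 1" unfolding k_def by (rule real_of_int_floor_add_one_gt)
    have k2: "r < (of_int k + 1) * T" using pos_divide_less_eq[OF T(1)] h2 by blast
    have "y r = y (r - of_int k * T)" using pi[of "r - of_int k * T" k] by (simp add: y_def)
    then show ?thesis using k1 k2 by (intro bexI[of _ "r - of_int k * T"]) (auto simp: algebra_simps)
  qed
  obtain t1 where t1: "t1 \<in> {0..T}" "\<And>s. s \<in> {0..T} \<Longrightarrow> y s \<le> y t1"
    using continuous_attains_sup[OF compact_Icc _ yc] T(1) by auto
  obtain t0 where t0: "t0 \<in> {0..T}" "\<And>s. s \<in> {0..T} \<Longrightarrow> y t0 \<le> y s"
    using continuous_attains_inf[OF compact_Icc _ yc] T(1) by auto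
  have mx: "y r \<le> y t1" for r using red[of r] t1 by auto
  have mn: "y t0 \<le> y r" for r using red[of r] t0 by auto
  have g1: "goodH (y t1)" unfolding y_def by (rule turn_max[OF sol tT]) (use mx in \<open>simp add: y_def\<close>)
  have g0: "goodH (y t0)" unfolding y_def by (rule turn_min[OF sol tT]) (use mn in \<open>simp add: y_def\<close>)
  have om: "\<gamma> t \<in> Om" for t
    using goodH_between[OF g0 g1 mn mx] tT[of t] by (simp add: Om_def y_def)
  have le: "V (\<gamma> b) \<le> V (\<gamma> a)" for a b
  proof -
    define n where "n = nat (ceiling ((b - a) / T))"
    have "(b - a) / T \<le> real n" unfolding n_def by linarith
    then have "b \<le> a + real n * T" using T(1) by (simp add: pos_divide_le_eq algebra_simps)
    then have "V (\<gamma> b) \<le> V (\<gamma> (a + real n * T))" by (rule V_mono[OF sol om])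
    then show ?thesis using pn by simp
  qed
  have "\<And>s. V (\<gamma> s) = V (\<gamma> 0)" using le by (metis order_antisym)
  then have "\<And>s t. \<gamma> s = \<gamma> t" using V_const[OF sol om] by blast
  then show False using nc by blast
qed

lemma no_homoclinic:
  assumes "homoclinic_loop F S" "S \<subseteq> TT"
  shows False
proof -
  obtain \<gamma> p where co: "connecting_orbit F \<gamma> p p" and S: "S = insert p (range \<gamma>)"
    using assms(1) unfolding homoclinic_loop_def by blast
  have "V p < V p" by (rule V_conn[OF co]) (use assms(2) S in auto)
  then show False by simp
qed

lemma no_polygon:
  assumes "oriented_phase_polygon F S" "S \<subseteq> TT"
  shows False
proof -
  obtain n p \<gamma> where n: "n \<ge> 2" and co: "\<And>i. i < n \<Longrightarrow> connecting_orbit F (\<gamma> i) (p i) (p (Suc i mod n))"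
    and S: "S = p ` {..<n} \<union> (\<Union>i<n. range (\<gamma> i))"
    using assms(1) unfolding oriented_phase_polygon_def by blast
  have pT: "p i \<in> TT" if "i < n" for i using that assms(2) S by auto
  have rT: "range (\<gamma> i) \<subseteq> TT" if "i < n" for i using that assms(2) S by auto
  have step: "V (p i) < V (p (Suc i mod n))" if "i < n" for i
  proof (rule V_conn[OF co[OF that] rT[OF that] pT[OF that] pT])
    show "Suc i mod n < n" using n by simp
  qed
  have chain: "V (p 0) < V (p k)" if "1 \<le> k" "k < n" for k
    using that
  proof (induction k)
    case 0 then show ?case by simp
  next
    case (Suc k)
    show ?case
    proof (cases "k = 0")
      case True
      then show ?thesis using step[of 0] n by simp
    next
      case False
      then have "V (p 0) < V (p k)" using Suc by simp
      moreover have "V (p k) < V (p (Suc k))" using step[of k] Suc by simp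
      ultimately show ?thesis by simp
    qed
  qed
  have "V (p 0) < V (p (n - 1))" using chain[of "n - 1"] n by simp
  moreover have "V (p (n - 1)) < V (p 0)" using step[of "n - 1"] n by simp
  ultimately show False by simp
qed

end

theorem theorem4p9:
  fixes f0 f1 f2 :: "real \<Rightarrow> real" and \<beta> :: "real \<times> real"
  assumes "smooth_on_nonneg f0" and "smooth_on_nonneg f1" and "smooth_on_nonneg f2"
    and "f_compatible f0 f1 f2 \<beta>"
  shows "\<not> (\<exists>\<gamma>. periodic_solution (vfield f0 f1 f2) \<gamma> \<and>
                 range \<gamma> \<subseteq> interior (triangle \<beta>)) \<and>
    \<not> (\<exists>S. homoclinic_loop (vfield f0 f1 f2) S \<and> S \<subseteq> interior (triangle \<beta>)) \<and>
    \<not> (\<exists>S. oriented_phase_polygon (vfield f0 f1 f2) S \<and> S \<subseteq> interior (triangle \<beta>))"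
proof -
  have fc: "fst \<beta> > snd \<beta>" "snd \<beta> \<le> lam f0" "lam f0 \<le> fst \<beta>"
    and hh: "\<And>I. I \<in> {0..1} \<Longrightarrow> hf f0 f1 f2 (fst \<beta>) I / (snd \<beta> - fst \<beta>) \<ge> 0 \<and>
                  hf f0 f1 f2 (snd \<beta>) I / (fst \<beta> - snd \<beta>) \<ge> 0"
    using assms(4) unfolding f_compatible_def by auto
  interpret tri f0 f1 f2 "fst \<beta>" "snd \<beta>"
  proof
    show "continuous_on {0<..} f0" by (rule smooth_cont[OF assms(1)])
    show "continuous_on {0<..} f1" by (rule smooth_cont[OF assms(2)])
    show "continuous_on {0<..} f2" by (rule smooth_cont[OF assms(3)])
    show "snd \<beta> < fst \<beta>" "snd \<beta> \<le> lam f0" "lam f0 \<le> fst \<beta>" using fc by auto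
    fix I :: real assume I: "0 \<le> I" "I \<le> 1"
    have "hf f0 f1 f2 (fst \<beta>) I / (snd \<beta> - fst \<beta>) \<ge> 0" using hh[of I] I by auto
    then show "hf f0 f1 f2 (fst \<beta>) I \<le> 0" using fc(1) by (simp add: zero_le_divide_iff)
    have "hf f0 f1 f2 (snd \<beta>) I / (fst \<beta> - snd \<beta>) \<ge> 0" using hh[of I] I by auto
    then show "0 \<le> hf f0 f1 f2 (snd \<beta>) I" using fc(1) by (simp add: zero_le_divide_iff)
  qed
  have tri_eq: "triangle \<beta> = convex hull {(snd \<beta>, 0), (fst \<beta>, 0), (0, 1)}" by (simp add: triangle_def)
  show ?thesis unfolding tri_eq using no_periodic no_homoclinic no_polygon by blast
qed


end
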